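(* (i) There is an exactly computable model — a family of binary observables $X_\epsilon\in\{-1,+1\}$ with nonzero ideal variance $v(0)>0$ and $\mathbb E[X_\epsilon]=\mu_0+\alpha\epsilon$ exactly ($\mu_0\in(-1,1)$, $\alpha\ne0$), estimated with a first-order Richardson rule with independent sampling — for which the positive crossing of the MSE difference satisfies \[ \epsilon^*(B)=\left(\frac{K_0}{\alpha^2}\right)^{1/2}B^{-1/2}+O(B^{-1}). \] (ii) There is an exactly computable deterministic-limit model — a family of binary observables $X_\epsilon\in\{-1,+1\}$ with $\mathbb E[X_\epsilon]=1-\kappa\epsilon$, $\kappa>0$, estimated with a first-order Richardson rule with scale factors $(1,a)$, $a>1$, and independent sampling — for which \[ \epsilon^*(B)=\frac{K_1}{\kappa^2}B^{-1}+O(B^{-2}). \] Thus both exponents $B^{-1/2}$ and $B^{-1}$, together with their leading constants, are attained.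
   Context: A first-order Richardson rule uses scale factors $1=\lambda_0<\lambda_1$ and coefficients $c_0,c_1$ with $c_0+c_1=1$, $c_0+c_1\lambda_1=0$ (for scales $(1,a)$: $c_0=a/(a-1)$, $c_1=-1/(a-1)$), and allocation fractions $\pi_0,\pi_1>0$ summing to $1$. With budget $B$, the unmitigated estimator is the mean of $B$ shots at noise $\epsilon$, and the ZNE estimator is $c_0\widehat\mu(\epsilon)+c_1\widehat\mu(\lambda_1\epsilon)$ with $\widehat\mu(\lambda_j\epsilon)$ the mean of $\pi_jB$ independent shots at noise $\lambda_j\epsilon$. The MSE difference is $\Delta_{\mathrm{MSE}}(\epsilon,B)=\mathrm{MSE}_{\mathrm{noisy}}-\mathrm{MSE}_{\mathrm{ZNE}}$ with $\mathrm{MSE}=\mathbb E[(\widehat\mu-\mu(0))^2]$, and $\epsilon^*(B)$ is its positive (nonzero) crossing. With $v(\epsilon)=\mathrm{Var}(X_\epsilon)$ and $v(\epsilon)=\nu\epsilon^q+\ldots$ the leading small-noise behavior, the variance-penalty constants are $K_q=\nu[\sum_jc_j^2\lambda_j^q/\pi_j-1]$; thus $K_0=v(0)[\sum_jc_j^2/\pi_j-1]$ in (i), and $K_1=2\kappa[\sum_jc_j^2\lambda_j/\pi_j-1]$ in (ii). *)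

theory Defs
  imports "HOL-Probability.Probability" "HOL-Library.Landau_Symbols"
begin

definition obs_mean :: "real pmf \<Rightarrow> real" where
  "obs_mean p = measure_pmf.expectation p (\<lambda>x. x)"

definition obs_var :: "real pmf \<Rightarrow> real" where
  "obs_var p = measure_pmf.variance p (\<lambda>x. x)"

text \<open>First-order Richardson rule with scale factors (1,a), coefficients c0 c1, allocations p0 p1.\<close>
definition richardson_rule1 :: "real \<Rightarrow> real \<Rightarrow> real \<Rightarrow> real \<Rightarrow> real \<Rightarrow> bool" where
  "richardson_rule1 a c0 c1 p0 p1 \<longleftrightarrow>
     1 < a \<and> c0 + c1 = 1 \<and> c0 + c1 * a = 0 \<and> 0 < p0 \<and> 0 < p1 \<and> p0 + p1 = 1"

definition binary_affine_model :: "(real \<Rightarrow> real pmf) \<Rightarrow> real \<Rightarrow> real \<Rightarrow> real \<Rightarrow> bool" where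
  "binary_affine_model X mu0 alpha E \<longleftrightarrow> 0 < E \<and>
     (\<forall>\<epsilon>\<in>{0..E}. set_pmf (X \<epsilon>) \<subseteq> {-1, 1} \<and> obs_mean (X \<epsilon>) = mu0 + alpha * \<epsilon>)"

text \<open>MSE of the unmitigated estimator (mean of B independent shots at noise eps), target mu(0).\<close>
definition mse_noisy :: "(real \<Rightarrow> real pmf) \<Rightarrow> real \<Rightarrow> real \<Rightarrow> real" where
  "mse_noisy X \<epsilon> B = (obs_mean (X \<epsilon>) - obs_mean (X 0))\<^sup>2 + obs_var (X \<epsilon>) / B"

text \<open>MSE of the ZNE estimator c0*muhat(eps) + c1*muhat(a*eps), with p_j*B independent shots
  at noise lambda_j*eps (bias squared plus variance).\<close>
definition mse_zne :: "(real \<Rightarrow> real pmf) \<Rightarrow> real \<Rightarrow> real \<Rightarrow> real \<Rightarrow> real \<Rightarrow> real \<Rightarrow> real \<Rightarrow> real \<Rightarrow> real" where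
  "mse_zne X a c0 c1 p0 p1 \<epsilon> B =
     (c0 * obs_mean (X \<epsilon>) + c1 * obs_mean (X (a * \<epsilon>)) - obs_mean (X 0))\<^sup>2
     + c0\<^sup>2 * obs_var (X \<epsilon>) / (p0 * B) + c1\<^sup>2 * obs_var (X (a * \<epsilon>)) / (p1 * B)"

definition delta_mse :: "(real \<Rightarrow> real pmf) \<Rightarrow> real \<Rightarrow> real \<Rightarrow> real \<Rightarrow> real \<Rightarrow> real \<Rightarrow> real \<Rightarrow> real \<Rightarrow> real" where
  "delta_mse X a c0 c1 p0 p1 \<epsilon> B = mse_noisy X \<epsilon> B - mse_zne X a c0 c1 p0 p1 \<epsilon> B"

text \<open>The positive (nonzero) crossing eps*(B) of Delta_MSE, among noise levels eps for which
  both eps and a*eps lie in the model's noise range [0,E].\<close>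
definition crossing :: "(real \<Rightarrow> real pmf) \<Rightarrow> real \<Rightarrow> real \<Rightarrow> real \<Rightarrow> real \<Rightarrow> real \<Rightarrow> real \<Rightarrow> nat \<Rightarrow> real" where
  "crossing X a c0 c1 p0 p1 E B =
     (THE \<epsilon>. 0 < \<epsilon> \<and> a * \<epsilon> \<le> E \<and> delta_mse X a c0 c1 p0 p1 \<epsilon> (real B) = 0)"

end

theory Submission
  imports Defs
begin

lemma bin_exp:
  assumes "set_pmf p \<subseteq> {-1, 1::real}"
  shows "measure_pmf.expectation p f = f 1 * pmf p 1 + f (-1) * pmf p (-1)"
proof -
  have "measure_pmf.expectation p f = (\<Sum>a\<in>{-1,1}. f a * pmf p a)"
    by (rule integral_measure_pmf_real) (use assms in auto)
  then show ?thesis by simp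
qed

lemma bin_sum:
  assumes "set_pmf p \<subseteq> {-1, 1::real}"
  shows "pmf p 1 + pmf p (-1) = 1"
proof -
  have "(\<Sum>a\<in>{-1,1}. pmf p a) = 1" by (rule sum_pmf_eq_1) (use assms in auto)
  then show ?thesis by simp
qed

lemma bin_var:
  assumes "set_pmf p \<subseteq> {-1, 1::real}"
  shows "obs_var p = 1 - (obs_mean p)\<^sup>2"
proof -
  have m: "obs_mean p = pmf p 1 - pmf p (-1)"
    unfolding obs_mean_def by (subst bin_exp[OF assms]) simp
  have s: "pmf p 1 + pmf p (-1) = 1" by (rule bin_sum[OF assms])
  have s2: "pmf p (-1) = 1 - pmf p 1" using s by simp
  show ?thesis unfolding obs_var_def
    apply (subst bin_exp[OF assms])
    apply (fold obs_mean_def)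
    unfolding m s2
    by (simp add: power2_eq_square algebra_simps)
qed

definition bin_pmf :: "real \<Rightarrow> real pmf" where
  "bin_pmf m = map_pmf (\<lambda>b. if b then 1 else -1) (bernoulli_pmf ((1 + m) / 2))"

lemma bin_pmf_set: "set_pmf (bin_pmf m) \<subseteq> {-1, 1}"
  unfolding bin_pmf_def by auto

lemma bin_pmf_mean:
  assumes "-1 \<le> m" "m \<le> 1"
  shows "obs_mean (bin_pmf m) = m"
proof -
  have inj: "inj (\<lambda>b. if b then 1 else (-1::real))" by (auto simp: inj_def split: if_splits)
  have p1: "pmf (bin_pmf m) 1 = (1 + m) / 2"
    using pmf_map_inj'[OF inj, of "bernoulli_pmf ((1 + m) / 2)" True] assms
    unfolding bin_pmf_def by simp
  have p2: "pmf (bin_pmf m) (-1) = 1 - (1 + m) / 2"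
    using pmf_map_inj'[OF inj, of "bernoulli_pmf ((1 + m) / 2)" False] assms
    unfolding bin_pmf_def by simp
  show ?thesis unfolding obs_mean_def
    by (subst bin_exp[OF bin_pmf_set]) (simp add: p1 p2 field_simps)
qed
lemma delta_eq:
  assumes model: "binary_affine_model X mu0 alpha E"
    and rule: "richardson_rule1 a c0 c1 p0 p1"
    and e0: "0 \<le> \<epsilon>" and eE: "a * \<epsilon> \<le> E" and B: "0 < B"
  shows "delta_mse X a c0 c1 p0 p1 \<epsilon> B * B = alpha\<^sup>2 * B * \<epsilon>\<^sup>2 -
     ((1 - mu0\<^sup>2) * (c0\<^sup>2 / p0 + c1\<^sup>2 / p1 - 1)
      - 2 * mu0 * alpha * (c0\<^sup>2 / p0 + c1\<^sup>2 * a / p1 - 1) * \<epsilon>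
      - alpha\<^sup>2 * (c0\<^sup>2 / p0 + c1\<^sup>2 * a\<^sup>2 / p1 - 1) * \<epsilon>\<^sup>2)"
proof -
  from rule have a1: "1 < a" and cs: "c0 + c1 = 1" "c0 + c1 * a = 0" and p: "0 < p0" "0 < p1"
    unfolding richardson_rule1_def by auto
  have ae: "\<epsilon> \<le> a * \<epsilon>" using a1 e0 by (simp add: mult_le_cancel_right1)
  have r0: "0 \<in> {0..E}" "\<epsilon> \<in> {0..E}" "a * \<epsilon> \<in> {0..E}"
    using e0 eE ae a1 by auto
  have M: "\<And>t. t \<in> {0..E} \<Longrightarrow> set_pmf (X t) \<subseteq> {-1,1} \<and> obs_mean (X t) = mu0 + alpha * t"
    using model unfolding binary_affine_model_def by auto
  have V: "\<And>t. t \<in> {0..E} \<Longrightarrow> obs_var (X t) = 1 - (mu0 + alpha * t)\<^sup>2"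
    using M bin_var by metis
  have m0: "obs_mean (X 0) = mu0" using M[OF r0(1)] by simp
  have m1: "obs_mean (X \<epsilon>) = mu0 + alpha * \<epsilon>" using M[OF r0(2)] by simp
  have m2: "obs_mean (X (a*\<epsilon>)) = mu0 + alpha * (a * \<epsilon>)" using M[OF r0(3)] by simp
  have bias: "c0 * obs_mean (X \<epsilon>) + c1 * obs_mean (X (a * \<epsilon>)) - obs_mean (X 0) = 0"
    unfolding m0 m1 m2
  proof -
    have "c0 * (mu0 + alpha * \<epsilon>) + c1 * (mu0 + alpha * (a * \<epsilon>)) - mu0
        = (c0 + c1 - 1) * mu0 + alpha * \<epsilon> * (c0 + c1 * a)" by (simp add: algebra_simps)
    then show "c0 * (mu0 + alpha * \<epsilon>) + c1 * (mu0 + alpha * (a * \<epsilon>)) - mu0 = 0"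
      using cs by simp
  qed
  have "delta_mse X a c0 c1 p0 p1 \<epsilon> B * B = alpha\<^sup>2 * B * \<epsilon>\<^sup>2 +
     ((1 - (mu0 + alpha * \<epsilon>)\<^sup>2) - c0\<^sup>2 * (1 - (mu0 + alpha * \<epsilon>)\<^sup>2) / p0
       - c1\<^sup>2 * (1 - (mu0 + alpha * (a*\<epsilon>))\<^sup>2) / p1)"
  proof -
    have "delta_mse X a c0 c1 p0 p1 \<epsilon> B = (obs_mean (X \<epsilon>) - obs_mean (X 0))\<^sup>2 + obs_var (X \<epsilon>) / B
       - (c0\<^sup>2 * obs_var (X \<epsilon>) / (p0 * B) + c1\<^sup>2 * obs_var (X (a * \<epsilon>)) / (p1 * B))"
      unfolding delta_mse_def mse_noisy_def mse_zne_def bias by simp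
    also have "\<dots> = alpha\<^sup>2 * \<epsilon>\<^sup>2 + (1 - (mu0 + alpha * \<epsilon>)\<^sup>2) / B
       - (c0\<^sup>2 * (1 - (mu0 + alpha * \<epsilon>)\<^sup>2) / (p0 * B) + c1\<^sup>2 * (1 - (mu0 + alpha * (a*\<epsilon>))\<^sup>2) / (p1 * B))"
      unfolding V[OF r0(2)] V[OF r0(3)] m0 m1 by (simp add: power2_eq_square)
    finally have D: "delta_mse X a c0 c1 p0 p1 \<epsilon> B = alpha\<^sup>2 * \<epsilon>\<^sup>2 + (1 - (mu0 + alpha * \<epsilon>)\<^sup>2) / B
       - (c0\<^sup>2 * (1 - (mu0 + alpha * \<epsilon>)\<^sup>2) / (p0 * B) + c1\<^sup>2 * (1 - (mu0 + alpha * (a*\<epsilon>))\<^sup>2) / (p1 * B))" .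
    show ?thesis unfolding D using B p by (simp add: field_simps)
  qed
  also have "\<dots> = alpha\<^sup>2 * B * \<epsilon>\<^sup>2 -
     ((1 - mu0\<^sup>2) * (c0\<^sup>2 / p0 + c1\<^sup>2 / p1 - 1)
      - 2 * mu0 * alpha * (c0\<^sup>2 / p0 + c1\<^sup>2 * a / p1 - 1) * \<epsilon>
      - alpha\<^sup>2 * (c0\<^sup>2 / p0 + c1\<^sup>2 * a\<^sup>2 / p1 - 1) * \<epsilon>\<^sup>2)"
    using p by (simp add: field_simps power2_eq_square)
  finally show ?thesis .
qed
lemma S_gt1:
  assumes "richardson_rule1 a c0 c1 p0 p1"
  shows "c0\<^sup>2 / p0 + c1\<^sup>2 / p1 > 1"
proof -
  from assms have a1: "1 < a" and cs: "c0 + c1 = 1" "c0 + c1 * a = 0" and p: "0 < p0" "0 < p1" "p0 + p1 = 1"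
    unfolding richardson_rule1_def by auto
  have "c1 * (a - 1) = -1" using cs by (simp add: algebra_simps)
  then have c1n: "c1 < 0" using a1
    by (smt (verit) mult_nonneg_nonneg)
  have d: "c0 - c1 > 1" using cs c1n by simp
  have d2: "(c0 - c1)\<^sup>2 > 1" using d
    by (smt (verit) one_less_power zero_less_numeral)
  have id: "(c0\<^sup>2 / p0 + c1\<^sup>2 / p1) * (p0 + p1) - (c0 - c1)\<^sup>2 = (c0 * p1 + c1 * p0)\<^sup>2 / (p0 * p1)"
    using p(1,2) by (simp add: field_simps power2_eq_square)
  have "(c0 * p1 + c1 * p0)\<^sup>2 / (p0 * p1) \<ge> 0" using p by simp
  then show ?thesis using id d2 p(3) by simp
qed

lemma quad_unique:
  fixes A K q x y :: real
  assumes "A > 0" "K > 0" "x > 0" "y > 0" "A * x\<^sup>2 - q * x - K = 0" "A * y\<^sup>2 - q * y - K = 0"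
  shows "x = y"
proof (rule ccontr)
  assume ne: "x \<noteq> y"
  have "(x - y) * (A * (x + y) - q) = 0" using assms(5,6) by (simp add: algebra_simps power2_eq_square)
  then have q: "q = A * (x + y)" using ne by simp
  have "A * x * y + K = 0" using assms(5) unfolding q by (simp add: algebra_simps power2_eq_square)
  moreover have "A * x * y > 0" using assms by simp
  ultimately show False using assms(2) by simp
qed

lemma root_bound:
  fixes b x s K q1 q2 E :: real
  assumes eq: "c * x\<^sup>2 = K + q1 * x + q2 * x\<^sup>2" and c: "c > 0" and x: "0 < x" "x \<le> E"
    and s: "0 \<le> s" "c * s\<^sup>2 = K"
  shows "\<bar>x - s\<bar> \<le> (\<bar>q1\<bar> + \<bar>q2\<bar> * E) / c"
proof -
  have e1: "c * (x - s) * (x + s) = x * (q1 + q2 * x)"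
    using eq s(2) by (simp add: algebra_simps power2_eq_square)
  have e2: "\<bar>q1 + q2 * x\<bar> \<le> \<bar>q1\<bar> + \<bar>q2\<bar> * E"
  proof -
    have "\<bar>q2 * x\<bar> \<le> \<bar>q2\<bar> * E" using x by (simp add: abs_mult mult_left_mono)
    then show ?thesis by linarith
  qed
  have "c * \<bar>x - s\<bar> * (x + s) = x * \<bar>q1 + q2 * x\<bar>"
    using e1 c x s by (metis abs_mult abs_of_pos abs_of_nonneg add_nonneg_nonneg less_imp_le)
  also have "\<dots> \<le> x * (\<bar>q1\<bar> + \<bar>q2\<bar> * E)" using e2 x by (simp add: mult_left_mono)
  also have "\<dots> \<le> (x + s) * (\<bar>q1\<bar> + \<bar>q2\<bar> * E)"
    using s x e2 by (intro mult_right_mono) auto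
  finally have "c * \<bar>x - s\<bar> * (x + s) \<le> (\<bar>q1\<bar> + \<bar>q2\<bar> * E) * (x + s)" by (simp add: mult.commute)
  then have "c * \<bar>x - s\<bar> \<le> \<bar>q1\<bar> + \<bar>q2\<bar> * E"
    using x s by (simp add: mult_le_cancel_right)
  then show ?thesis using c by (simp add: field_simps mult.commute)
qed
lemma part1_asym:
  assumes mu: "-1 < mu0" "mu0 < 1" and al: "alpha \<noteq> 0" and rule: "richardson_rule1 a c0 c1 p0 p1"
    and model: "binary_affine_model X mu0 alpha E"
  shows "(\<lambda>B. crossing X a c0 c1 p0 p1 E B - sqrt (obs_var (X 0) * (c0\<^sup>2 / p0 + c1\<^sup>2 / p1 - 1) / alpha\<^sup>2) * real B powr (-1/2))
              \<in> O(\<lambda>B. 1 / real B)"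
proof -
  from rule have a1: "1 < a" and p: "0 < p0" "0 < p1"
    unfolding richardson_rule1_def by auto
  have E0: "0 < E" using model unfolding binary_affine_model_def by auto
  have "set_pmf (X 0) \<subseteq> {-1,1} \<and> obs_mean (X 0) = mu0 + alpha * 0"
    using model E0 unfolding binary_affine_model_def by auto
  then have v0: "obs_var (X 0) = 1 - mu0\<^sup>2" using bin_var by auto
  define K0 where "K0 = (1 - mu0\<^sup>2) * (c0\<^sup>2 / p0 + c1\<^sup>2 / p1 - 1)"
  define q1 where "q1 = - 2 * mu0 * alpha * (c0\<^sup>2 / p0 + c1\<^sup>2 * a / p1 - 1)"
  define q2 where "q2 = - alpha\<^sup>2 * (c0\<^sup>2 / p0 + c1\<^sup>2 * a\<^sup>2 / p1 - 1)"
  have V0: "1 - mu0\<^sup>2 > 0" using mu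
    by (smt (verit) abs_le_square_iff abs_of_nonneg abs_of_nonpos power_one)
  have K0: "K0 > 0" unfolding K0_def using V0 S_gt1[OF rule] by simp
  have al2: "alpha\<^sup>2 > 0" using al by simp
  define e where "e = E / a"
  have e0: "e > 0" using E0 a1 by (simp add: e_def)
  define N0 where "N0 = (\<bar>q2\<bar> + (\<bar>q1\<bar> * e + K0) / e\<^sup>2) / alpha\<^sup>2 + 1"
  define C where "C = \<bar>q1\<bar> + \<bar>q2\<bar> * E"
  have key: "\<bar>crossing X a c0 c1 p0 p1 E B - sqrt (obs_var (X 0) * (c0\<^sup>2 / p0 + c1\<^sup>2 / p1 - 1) / alpha\<^sup>2) * real B powr (-1/2)\<bar>
      \<le> C / alpha\<^sup>2 * norm (1 / real B)" if BN: "real B \<ge> N0" for B :: nat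
  proof -
    define b where "b = real B"
    have N0ge: "N0 \<ge> 1" unfolding N0_def using K0 e0 al2
      by (simp add: add_nonneg_nonneg)
    have b1: "b \<ge> 1" using BN N0ge b_def by simp
    have "alpha\<^sup>2 * b \<ge> alpha\<^sup>2 * N0" using BN b_def al2 by simp
    also have "alpha\<^sup>2 * N0 = \<bar>q2\<bar> + (\<bar>q1\<bar> * e + K0) / e\<^sup>2 + alpha\<^sup>2"
      unfolding N0_def using al2 by (simp add: field_simps)
    finally have ab: "alpha\<^sup>2 * b - q2 \<ge> (\<bar>q1\<bar> * e + K0) / e\<^sup>2 + alpha\<^sup>2" by linarith
    define A where "A = alpha\<^sup>2 * b - q2"
    have A0: "A > 0" using ab K0 e0 al2 unfolding A_def
      by (smt (verit) divide_nonneg_pos mult_nonneg_nonneg abs_ge_zero zero_less_power)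
    define f where "f x = A * x\<^sup>2 - q1 * x - K0" for x
    have fe: "f e \<ge> 0"
    proof -
      have "(\<bar>q1\<bar> * e + K0) / e\<^sup>2 \<le> A" using ab al2 unfolding A_def by linarith
      then have "((\<bar>q1\<bar> * e + K0) / e\<^sup>2) * e\<^sup>2 \<le> A * e\<^sup>2"
        by (intro mult_right_mono) auto
      moreover have "((\<bar>q1\<bar> * e + K0) / e\<^sup>2) * e\<^sup>2 = \<bar>q1\<bar> * e + K0" using e0 by simp
      ultimately have "A * e\<^sup>2 \<ge> \<bar>q1\<bar> * e + K0" by simp
      moreover have "q1 * e \<le> \<bar>q1\<bar> * e" using e0 by (simp add: mult_right_mono)
      ultimately show ?thesis unfolding f_def by linarith
    qed
    have f0: "f 0 < 0" unfolding f_def using K0 by simp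
    have "continuous_on {0..e} f" unfolding f_def by (intro continuous_intros)
    then obtain x where x: "0 \<le> x" "x \<le> e" "f x = 0"
      using IVT'[of f 0 0 e] f0 fe e0 by auto
    have xpos: "x > 0" using x f0 by (cases "x = 0") auto
    have axE: "a * x \<le> E" using x(2) a1 unfolding e_def by (simp add: field_simps)
    have b0: "b > 0" using b1 by simp
    have deq: "delta_mse X a c0 c1 p0 p1 y b * b = f y" if "0 \<le> y" "a * y \<le> E" for y
      unfolding f_def A_def K0_def q1_def q2_def
      using delta_eq[OF model rule that b0] by (simp add: algebra_simps)
    have cross: "crossing X a c0 c1 p0 p1 E B = x"
      unfolding crossing_def b_def[symmetric]
    proof (rule the_equality)
      show "0 < x \<and> a * x \<le> E \<and> delta_mse X a c0 c1 p0 p1 x b = 0"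
        using xpos axE deq[of x] x(3) b0 by auto
    next
      fix y assume y: "0 < y \<and> a * y \<le> E \<and> delta_mse X a c0 c1 p0 p1 y b = 0"
      then have "f y = 0" using deq[of y] by auto
      then show "y = x" using quad_unique[OF A0 K0 _ xpos] y x(3) unfolding f_def by auto
    qed
    define s where "s = sqrt (K0 / alpha\<^sup>2) * b powr (-1/2)"
    have s0: "s \<ge> 0" unfolding s_def using K0 al2 by simp
    have pw: "(b powr (-1/2))\<^sup>2 = 1 / b"
    proof -
      have "(b powr (-1/2))\<^sup>2 = b powr (-1/2) * b powr (-1/2)" by (simp add: power2_eq_square)
      also have "\<dots> = b powr (-1)" using b0 by (simp add: powr_add[symmetric])
      also have "\<dots> = 1 / b" using b0 by (simp add: powr_minus divide_inverse)
      finally show ?thesis .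
    qed
    have s2: "alpha\<^sup>2 * b * s\<^sup>2 = K0"
      unfolding s_def power_mult_distrib pw using K0 al2 b0 by simp
    have "x \<le> a * x" using xpos a1 by simp
    then have xE: "x \<le> E" using axE by linarith
    have feq: "alpha\<^sup>2 * b * x\<^sup>2 = K0 + q1 * x + q2 * x\<^sup>2"
      using x(3) unfolding f_def A_def by (simp add: algebra_simps)
    have "\<bar>x - s\<bar> \<le> C / (alpha\<^sup>2 * b)"
      unfolding C_def by (rule root_bound[OF feq _ xpos xE s0 s2]) (use al2 b0 in simp)
    then show ?thesis unfolding cross s_def v0 K0_def b_def
      using b0 b_def by (simp add: field_simps)
  qed
  show ?thesis
  proof (rule bigoI[where c = "C / alpha\<^sup>2"])
    show "\<forall>\<^sub>F B in at_top. norm (crossing X a c0 c1 p0 p1 E B - sqrt (obs_var (X 0) * (c0\<^sup>2 / p0 + c1\<^sup>2 / p1 - 1) / alpha\<^sup>2) * real B powr (-1/2))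
        \<le> C / alpha\<^sup>2 * norm (1 / real B)"
      unfolding eventually_at_top_linorder
    proof (rule exI[of _ "nat \<lceil>N0\<rceil>"], intro allI impI)
      fix n :: nat assume "nat \<lceil>N0\<rceil> \<le> n"
      then have "real (nat \<lceil>N0\<rceil>) \<le> real n" by linarith
      then have "N0 \<le> real n" using real_nat_ceiling_ge[of N0] by linarith
      then show "norm (crossing X a c0 c1 p0 p1 E n - sqrt (obs_var (X 0) * (c0\<^sup>2 / p0 + c1\<^sup>2 / p1 - 1) / alpha\<^sup>2) * real n powr (-1/2))
        \<le> C / alpha\<^sup>2 * norm (1 / real n)" using key by simp
    qed
  qed
qed
lemma part2_asym:
  assumes k: "0 < \<kappa>" and rule: "richardson_rule1 a c0 c1 p0 p1"
    and model: "binary_affine_model X 1 (-\<kappa>) E"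
  shows "(\<lambda>B. crossing X a c0 c1 p0 p1 E B - 2 * \<kappa> * (c0\<^sup>2 * 1 / p0 + c1\<^sup>2 * a / p1 - 1) / \<kappa>\<^sup>2 * real B powr (-1))
              \<in> O(\<lambda>B. 1 / (real B)\<^sup>2)"
proof -
  from rule have a1: "1 < a" and p: "0 < p0" "0 < p1"
    unfolding richardson_rule1_def by auto
  have E0: "0 < E" using model unfolding binary_affine_model_def by auto
  define K1 where "K1 = 2 * \<kappa> * (c0\<^sup>2 * 1 / p0 + c1\<^sup>2 * a / p1 - 1)"
  define D where "D = c0\<^sup>2 / p0 + c1\<^sup>2 * a\<^sup>2 / p1 - 1"
  have "c1\<^sup>2 / p1 \<le> c1\<^sup>2 * a / p1" using a1 p
    by (simp add: divide_right_mono mult_le_cancel_left1)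
  then have K1: "K1 > 0" unfolding K1_def using S_gt1[OF rule] k by simp
  have k2: "\<kappa>\<^sup>2 > 0" using k by simp
  define N0 where "N0 = 2 * \<bar>D\<bar> + K1 * a / (\<kappa>\<^sup>2 * E) + 1"
  define C where "C = 2 * K1 * \<bar>D\<bar> / \<kappa>\<^sup>2"
  have key: "\<bar>crossing X a c0 c1 p0 p1 E B - K1 / \<kappa>\<^sup>2 * real B powr (-1)\<bar>
      \<le> C * norm (1 / (real B)\<^sup>2)" if BN: "real B \<ge> N0" for B :: nat
  proof -
    define b where "b = real B"
    have t0: "K1 * a / (\<kappa>\<^sup>2 * E) > 0" using K1 a1 k2 E0 by simp
    have b0: "b > 0" using BN t0 unfolding N0_def b_def by simp
    have bD: "b + D \<ge> K1 * a / (\<kappa>\<^sup>2 * E)" using BN unfolding N0_def b_def by linarith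
    have bD2: "b + D \<ge> b / 2" using BN t0 unfolding N0_def b_def by linarith
    have bD0: "b + D > 0" using bD t0 by linarith
    define x where "x = K1 / (\<kappa>\<^sup>2 * (b + D))"
    have xpos: "x > 0" unfolding x_def using K1 k2 bD0 by simp
    have axE: "a * x \<le> E"
    proof -
      have "K1 * a \<le> (b + D) * (\<kappa>\<^sup>2 * E)" using bD k2 E0 by (simp add: field_simps)
      moreover have "a * x = K1 * a / ((b + D) * \<kappa>\<^sup>2)" unfolding x_def by (simp add: field_simps)
      moreover have "(b + D) * \<kappa>\<^sup>2 > 0" using k2 bD0 by simp
      ultimately show ?thesis by (simp add: pos_divide_le_eq mult_ac)
    qed
    have deq: "delta_mse X a c0 c1 p0 p1 y b * b = y * (\<kappa>\<^sup>2 * (b + D) * y - K1)" if "0 \<le> y" "a * y \<le> E" for y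
      unfolding K1_def D_def
      using delta_eq[OF model rule that b0] by (simp add: algebra_simps power2_eq_square)
    have xeq: "\<kappa>\<^sup>2 * (b + D) * x = K1" unfolding x_def using k2 bD0 by simp
    have cross: "crossing X a c0 c1 p0 p1 E B = x"
      unfolding crossing_def b_def[symmetric]
    proof (rule the_equality)
      show "0 < x \<and> a * x \<le> E \<and> delta_mse X a c0 c1 p0 p1 x b = 0"
        using xpos axE deq[of x] xeq b0 by auto
    next
      fix y assume y: "0 < y \<and> a * y \<le> E \<and> delta_mse X a c0 c1 p0 p1 y b = 0"
      then have "\<kappa>\<^sup>2 * (b + D) * y = K1" using deq[of y] by auto
      moreover have "\<kappa>\<^sup>2 * (b + D) \<noteq> 0" using k2 bD0 by simp
      ultimately show "y = x" unfolding x_def by (simp add: eq_divide_eq mult.commute)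
    qed
    have pw: "b powr (-1) = 1 / b" using b0 by (simp add: powr_minus divide_inverse)
    have diff: "x - K1 / \<kappa>\<^sup>2 * (1 / b) = - (K1 * D) / (\<kappa>\<^sup>2 * b * (b + D))"
    proof -
      define w where "w = b + D"
      have w0: "w \<noteq> 0" "b \<noteq> 0" "\<kappa>\<^sup>2 \<noteq> 0" using bD0 b0 k2 unfolding w_def by auto
      have Dw: "D = w - b" unfolding w_def by simp
      show ?thesis unfolding x_def w_def[symmetric] unfolding Dw using w0
        by (simp add: divide_simps) (simp add: algebra_simps)
    qed
    have "\<bar>x - K1 / \<kappa>\<^sup>2 * (1 / b)\<bar> = K1 * \<bar>D\<bar> / (\<kappa>\<^sup>2 * b * (b + D))"
      unfolding diff using K1 k2 bD0 b0 by (simp add: abs_mult abs_divide)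
    also have "\<dots> \<le> K1 * \<bar>D\<bar> / (\<kappa>\<^sup>2 * b * (b / 2))"
      using K1 k2 bD2 b0 by (intro divide_left_mono mult_left_mono mult_pos_pos) auto
    also have "\<dots> = C * (1 / b\<^sup>2)" unfolding C_def using k2 b0 by (simp add: field_simps power2_eq_square)
    finally show ?thesis unfolding cross b_def[symmetric] pw by simp
  qed
  show ?thesis unfolding K1_def[symmetric]
  proof (rule bigoI[where c = C])
    show "\<forall>\<^sub>F B in at_top. norm (crossing X a c0 c1 p0 p1 E B - K1 / \<kappa>\<^sup>2 * real B powr (-1))
        \<le> C * norm (1 / (real B)\<^sup>2)"
      unfolding eventually_at_top_linorder
    proof (rule exI[of _ "nat \<lceil>N0\<rceil>"], intro allI impI)
      fix n :: nat assume "nat \<lceil>N0\<rceil> \<le> n"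
      then have "real (nat \<lceil>N0\<rceil>) \<le> real n" by linarith
      then have "N0 \<le> real n" using real_nat_ceiling_ge[of N0] by linarith
      then show "norm (crossing X a c0 c1 p0 p1 E n - K1 / \<kappa>\<^sup>2 * real n powr (-1))
        \<le> C * norm (1 / (real n)\<^sup>2)" using key by simp
    qed
  qed
qed
lemma part1_exists:
  assumes mu: "-1 < mu0" "mu0 < 1" and al: "alpha \<noteq> 0"
  shows "\<exists>X E. binary_affine_model X mu0 alpha E \<and> obs_var (X 0) > 0"
proof -
  define E where "E = (1 - \<bar>mu0\<bar>) / \<bar>alpha\<bar>"
  define X where "X = (\<lambda>t. bin_pmf (mu0 + alpha * t))"
  have E0: "E > 0" unfolding E_def using mu al by simp
  have rng: "-1 \<le> mu0 + alpha * t \<and> mu0 + alpha * t \<le> 1" if t: "t \<in> {0..E}" for t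
  proof -
    have "\<bar>alpha * t\<bar> = \<bar>alpha\<bar> * t" using t by (simp add: abs_mult)
    also have "\<dots> \<le> \<bar>alpha\<bar> * E" using t by (simp add: mult_left_mono)
    also have "\<dots> = 1 - \<bar>mu0\<bar>" unfolding E_def using al by simp
    finally show ?thesis by linarith
  qed
  have "binary_affine_model X mu0 alpha E"
    unfolding binary_affine_model_def X_def using E0 rng bin_pmf_set bin_pmf_mean by auto
  moreover have "obs_var (X 0) > 0"
  proof -
    have "obs_var (X 0) = 1 - mu0\<^sup>2" unfolding X_def
      using bin_var[OF bin_pmf_set] bin_pmf_mean[of mu0] mu by simp
    also have "\<dots> > 0" using mu
      by (smt (verit) abs_le_square_iff abs_of_nonneg abs_of_nonpos power_one)
    finally show ?thesis .
  qed
  ultimately show ?thesis by blast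
qed

lemma part2_exists:
  assumes k: "0 < \<kappa>"
  shows "\<exists>X E. binary_affine_model X 1 (-\<kappa>) E"
proof -
  define X where "X = (\<lambda>t. bin_pmf (1 + (-\<kappa>) * t))"
  have rng: "-1 \<le> 1 + (-\<kappa>) * t \<and> 1 + (-\<kappa>) * t \<le> 1" if t: "t \<in> {0..1/\<kappa>}" for t
  proof -
    have "\<kappa> * t \<le> 1" using t k by (simp add: field_simps)
    moreover have "0 \<le> \<kappa> * t" using t k by simp
    ultimately show ?thesis by simp
  qed
  have "binary_affine_model X 1 (-\<kappa>) (1/\<kappa>)"
    unfolding binary_affine_model_def X_def using k rng bin_pmf_set bin_pmf_mean by auto
  then show ?thesis by blast
qed

theorem proposition11:
  shows
  "(\<forall>mu0 alpha a c0 c1 p0 p1.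
      -1 < mu0 \<and> mu0 < 1 \<and> alpha \<noteq> 0 \<and> richardson_rule1 a c0 c1 p0 p1 \<longrightarrow>
        (\<exists>X E. binary_affine_model X mu0 alpha E \<and> obs_var (X 0) > 0) \<and>
        (\<forall>X E. binary_affine_model X mu0 alpha E \<longrightarrow>
           (let K0 = obs_var (X 0) * (c0\<^sup>2 / p0 + c1\<^sup>2 / p1 - 1) in
            (\<lambda>B. crossing X a c0 c1 p0 p1 E B - sqrt (K0 / alpha\<^sup>2) * real B powr (-1/2))
              \<in> O(\<lambda>B. 1 / real B))))
   \<and>
   (\<forall>\<kappa> a c0 c1 p0 p1.
      0 < \<kappa> \<and> richardson_rule1 a c0 c1 p0 p1 \<longrightarrow>
        (\<exists>X E. binary_affine_model X 1 (-\<kappa>) E) \<and>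
        (\<forall>X E. binary_affine_model X 1 (-\<kappa>) E \<longrightarrow>
           (let K1 = 2 * \<kappa> * (c0\<^sup>2 * 1 / p0 + c1\<^sup>2 * a / p1 - 1) in
            (\<lambda>B. crossing X a c0 c1 p0 p1 E B - K1 / \<kappa>\<^sup>2 * real B powr (-1))
              \<in> O(\<lambda>B. 1 / (real B)\<^sup>2))))"
  unfolding Let_def
proof (intro conjI allI impI)
  fix mu0 alpha a c0 c1 p0 p1 :: real
  assume h: "-1 < mu0 \<and> mu0 < 1 \<and> alpha \<noteq> 0 \<and> richardson_rule1 a c0 c1 p0 p1"
  then show "\<exists>X E. binary_affine_model X mu0 alpha E \<and> obs_var (X 0) > 0"
    using part1_exists by blast
  fix X E assume m: "binary_affine_model X mu0 alpha E"
  show "(\<lambda>B. crossing X a c0 c1 p0 p1 E B - sqrt (obs_var (X 0) * (c0\<^sup>2 / p0 + c1\<^sup>2 / p1 - 1) / alpha\<^sup>2) * real B powr (-1/2))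
              \<in> O(\<lambda>B. 1 / real B)"
    using part1_asym[OF _ _ _ _ m] h by blast
next
  fix \<kappa> a c0 c1 p0 p1 :: real
  assume h: "0 < \<kappa> \<and> richardson_rule1 a c0 c1 p0 p1"
  then show "\<exists>X E. binary_affine_model X 1 (-\<kappa>) E" using part2_exists by blast
  fix X E assume m: "binary_affine_model X 1 (-\<kappa>) E"
  show "(\<lambda>B. crossing X a c0 c1 p0 p1 E B - 2 * \<kappa> * (c0\<^sup>2 * 1 / p0 + c1\<^sup>2 * a / p1 - 1) / \<kappa>\<^sup>2 * real B powr (-1))
              \<in> O(\<lambda>B. 1 / (real B)\<^sup>2)"
    using part2_asym[OF _ _ m] h by blast
qed
end
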